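(* There is an element-based generator $\mathds{G}$ such that for every countable collection of languages $\mathcal{L}=\{L_1,L_2,\dots\}$, every target language $K\in\mathcal{L}$, and every enumeration of $K$ with $o(1)$-noise and arbitrary omissions, $\mathds{G}$ generates in the limit from $K$; that is, there is a finite $n^\star$ such that $w_n\in K$ for all $n\ge n^\star$, where $w_n$ is the output of $\mathds{G}$ at step $n$.
   Context: The universe is $U=\mathbb{N}$ (a countable set of strings, identified with $\mathbb{N}$). A language is an infinite subset of $U$; a collection is a countable family $\mathcal{L}=\{L_1,L_2,\dots\}$ of languages. An enumeration is a sequence $x_1,x_2,\dots$ of distinct elements of $U$; write $S_n=\{x_1,\dots,x_n\}$. The empirical noise rate of a language $L$ is $R(L;x_{1:n})=\frac1n|\{t\le n: x_t\notin L\}|$. An enumeration of a language $L$ with $o(1)$-noise is a sequence in which every element of $L$ appears exactly once and $R(L;x_{1:n})\to 0$. An enumeration of $K$ with $o(1)$-noise and arbitrary omissions is an enumeration with $o(1)$-noise of some $\hat K\subseteq K$ with $|\hat K|=\infty$. An element-based generator is a sequence of maps $\mathds{G}_n$ that, given $x_1,\dots,x_n$, outputs $w_n\in U\setminus(S_n\cup\{w_1,\dots,w_{n-1}\})$; it may use the collection $\mathcal{L}$ but not the target $K$. *)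

theory Defs
  imports Complex_Main
begin

text \<open>Universe U = nat. A sequence x_1, x_2, ... is a function x :: nat => nat with
  x 0 = x_1; the prefix x_1..x_n is map x [0..<n]. A collection L_1, L_2, ...
  is a function Ls :: nat => nat set.\<close>

definition noise_rate :: "nat set \<Rightarrow> (nat \<Rightarrow> nat) \<Rightarrow> nat \<Rightarrow> real" where
  "noise_rate L x n = real (card {t. t < n \<and> x t \<notin> L}) / real n"

definition noisy_enum :: "nat set \<Rightarrow> (nat \<Rightarrow> nat) \<Rightarrow> bool" where
  "noisy_enum L x \<longleftrightarrow> inj x \<and> L \<subseteq> range x \<and> (noise_rate L x \<longlonglongrightarrow> 0)"

definition noisy_enum_omissions :: "nat set \<Rightarrow> (nat \<Rightarrow> nat) \<Rightarrow> bool" where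
  "noisy_enum_omissions K x \<longleftrightarrow> (\<exists>Kh. Kh \<subseteq> K \<and> infinite Kh \<and> noisy_enum Kh x)"

text \<open>Element-based generator: G Ls [x_1,...,x_n] = w_n. It may depend on the collection
  Ls but not on the target. Its output must avoid S_n and the previous outputs.\<close>
definition element_generator :: "((nat \<Rightarrow> nat set) \<Rightarrow> nat list \<Rightarrow> nat) \<Rightarrow> bool" where
  "element_generator G \<longleftrightarrow>
     (\<forall>Ls x n. inj x \<longrightarrow> 1 \<le> n \<longrightarrow>
        G Ls (map x [0..<n]) \<notin> set (map x [0..<n]) \<and>
        (\<forall>m. 1 \<le> m \<and> m < n \<longrightarrow> G Ls (map x [0..<n]) \<noteq> G Ls (map x [0..<m])))"

end

theory Submission
  imports Defs
begin

definition pick :: "nat set \<Rightarrow> nat set \<Rightarrow> nat" where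
  "pick C E = (if infinite C then (SOME w. w \<in> C \<and> w \<notin> E) else (SOME w. w \<notin> E))"

lemma pick_notin: "finite E \<Longrightarrow> pick C E \<notin> E"
proof -
  assume E: "finite E"
  show ?thesis
  proof (cases "infinite C")
    case True
    then have "infinite (C - E)" using E by (simp add: Diff_infinite_finite)
    then have "\<exists>w. w \<in> C \<and> w \<notin> E" by (metis Diff_iff finite.emptyI ex_in_conv)
    then show ?thesis using True unfolding pick_def by (metis (mono_tags, lifting) someI_ex)
  next
    case False
    have "\<exists>w::nat. w \<notin> E" using E ex_new_if_finite infinite_UNIV_nat by blast
    then show ?thesis using False unfolding pick_def by (metis (mono_tags, lifting) someI_ex)
  qed
qed

lemma pick_in: "finite E \<Longrightarrow> infinite C \<Longrightarrow> pick C E \<in> C"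
proof -
  assume E: "finite E" and C: "infinite C"
  then have "infinite (C - E)" by (simp add: Diff_infinite_finite)
  then have "\<exists>w. w \<in> C \<and> w \<notin> E" by (metis Diff_iff finite.emptyI ex_in_conv)
  then show ?thesis using C unfolding pick_def by (metis (mono_tags, lifting) someI_ex)
qed

definition nr :: "nat set \<Rightarrow> nat list \<Rightarrow> real" where
  "nr L xs = real (card {t. t < length xs \<and> xs ! t \<notin> L}) / real (length xs)"

definition thr :: "nat \<Rightarrow> real" where "thr i = (1/2)^(i+2)"

fun acc :: "(nat \<Rightarrow> nat set) \<Rightarrow> nat list \<Rightarrow> nat \<Rightarrow> nat set" where
  "acc Ls xs 0 = {}"
| "acc Ls xs (Suc i) = (if nr (Ls i) xs \<le> thr i \<and> infinite (\<Inter>j\<in>insert i (acc Ls xs i). Ls j)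
     then insert i (acc Ls xs i) else acc Ls xs i)"

definition cand :: "(nat \<Rightarrow> nat set) \<Rightarrow> nat list \<Rightarrow> nat set" where
  "cand Ls xs = (\<Inter>j\<in>acc Ls xs (length xs). Ls j)"

fun outs :: "(nat \<Rightarrow> nat set) \<Rightarrow> nat list \<Rightarrow> nat \<Rightarrow> nat list" where
  "outs Ls xs 0 = []"
| "outs Ls xs (Suc k) = outs Ls xs k @
     [pick (cand Ls (take (Suc k) xs)) (set (take (Suc k) xs) \<union> set (outs Ls xs k))]"

definition gen :: "(nat \<Rightarrow> nat set) \<Rightarrow> nat list \<Rightarrow> nat" where
  "gen Ls xs = last (outs Ls xs (length xs))"

lemma acc_inf: "infinite (\<Inter>j\<in>acc Ls xs i. Ls j)"
  by (induction i) auto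

lemma acc_sub: "acc Ls xs i \<subseteq> {..<i}"
  by (induction i) auto

lemma acc_thr: "j \<in> acc Ls xs i \<Longrightarrow> nr (Ls j) xs \<le> thr j"
  by (induction i) (auto split: if_splits)

lemma acc_mono: "i \<le> i' \<Longrightarrow> acc Ls xs i \<subseteq> acc Ls xs i'"
proof (induction i' rule: dec_induct)
  case base then show ?case by simp
next
  case (step n) then show ?case by auto
qed

lemma outs_take: "k \<le> m \<Longrightarrow> outs Ls (take m xs) k = outs Ls xs k"
  by (induction k) (auto simp: min_def)

lemma outs_set_mono: "m \<le> k \<Longrightarrow> set (outs Ls xs m) \<subseteq> set (outs Ls xs k)"
proof (induction k rule: dec_induct)
  case base then show ?case by simp
next
  case (step n) then show ?case by auto
qed

lemma outs_nonempty: "outs Ls xs (Suc k) \<noteq> []" by simp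

lemma gen_eq: "length xs = Suc k \<Longrightarrow>
  gen Ls xs = pick (cand Ls xs) (set xs \<union> set (outs Ls xs k))"
  unfolding gen_def by simp

lemma gen_fresh: "length xs = Suc k \<Longrightarrow> gen Ls xs \<notin> set xs \<union> set (outs Ls xs k)"
proof -
  assume "length xs = Suc k"
  then have "gen Ls xs = pick (cand Ls xs) (set xs \<union> set (outs Ls xs k))" by (rule gen_eq)
  moreover have "pick (cand Ls xs) (set xs \<union> set (outs Ls xs k)) \<notin> set xs \<union> set (outs Ls xs k)"
    by (rule pick_notin) simp
  ultimately show ?thesis by simp
qed

lemma gen_prev: assumes "1 \<le> m" "m < length xs" "length xs = Suc k"
  shows "gen Ls (take m xs) \<in> set (outs Ls xs k)"
proof -
  obtain m' where m': "m = Suc m'" using assms(1) by (cases m) auto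
  have "gen Ls (take m xs) = last (outs Ls (take m xs) m)"
    unfolding gen_def using assms by simp
  also have "\<dots> = last (outs Ls xs m)" using outs_take[of m m] by simp
  also have "\<dots> \<in> set (outs Ls xs m)" using m' outs_nonempty last_in_set by metis
  finally show ?thesis using outs_set_mono[of m k] assms by auto
qed

lemma gen_elem: "element_generator gen"
  unfolding element_generator_def
proof (intro allI impI)
  fix Ls :: "nat \<Rightarrow> nat set" and x :: "nat \<Rightarrow> nat" and n :: nat
  assume n: "1 \<le> n"
  define xs where "xs = map x [0..<n]"
  obtain k where k: "length xs = Suc k" using n xs_def by (cases n) auto
  have A: "gen Ls xs \<notin> set xs \<union> set (outs Ls xs k)" using gen_fresh[OF k] .
  have B: "gen Ls (map x [0..<m]) \<in> set (outs Ls xs k)" if m: "1 \<le> m \<and> m < n" for m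
  proof -
    have "map x [0..<m] = take m xs" using m xs_def by (simp add: take_map)
    then show ?thesis
      using gen_prev[of m xs k] m k xs_def by simp
  qed
  show "gen Ls (map x [0..<n]) \<notin> set (map x [0..<n]) \<and>
        (\<forall>m. 1 \<le> m \<and> m < n \<longrightarrow> gen Ls (map x [0..<n]) \<noteq> gen Ls (map x [0..<m]))"
  proof (intro conjI allI impI)
    show "gen Ls (map x [0..<n]) \<notin> set (map x [0..<n])" using A unfolding xs_def by blast
  next
    fix m assume m: "1 \<le> m \<and> m < n"
    have "gen Ls (map x [0..<m]) \<in> set (outs Ls xs k)" using B[OF m] .
    moreover have "gen Ls (map x [0..<n]) \<notin> set (outs Ls xs k)" using A unfolding xs_def by blast
    ultimately show "gen Ls (map x [0..<n]) \<noteq> gen Ls (map x [0..<m])" by metis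
  qed
qed

lemma nr_eq: "nr L (map x [0..<n]) = noise_rate L x n"
  unfolding nr_def noise_rate_def
  by (simp add: conj_commute cong: conj_cong)

lemma thr_sum: "(\<Sum>j<m. thr j) = 1/2 - (1/2)^(m+1)"
  by (induction m) (auto simp: thr_def)

lemma noise_K_small:
  assumes "noisy_enum_omissions K x" "0 < e"
  shows "\<exists>N. \<forall>n\<ge>N. noise_rate K x n < e"
proof -
  obtain Kh where Kh: "Kh \<subseteq> K" "noisy_enum Kh x" using assms(1) unfolding noisy_enum_omissions_def by blast
  then have "noise_rate Kh x \<longlonglongrightarrow> 0" unfolding noisy_enum_def by blast
  then have "eventually (\<lambda>n. noise_rate Kh x n < e) sequentially"
    using assms(2) by (rule order_tendstoD(2))
  then obtain N where N: "\<And>n. n \<ge> N \<Longrightarrow> noise_rate Kh x n < e"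
    unfolding eventually_sequentially by blast
  have "noise_rate K x n \<le> noise_rate Kh x n" for n
  proof -
    have "{t. t < n \<and> x t \<notin> K} \<subseteq> {t. t < n \<and> x t \<notin> Kh}" using Kh(1) by blast
    then have "card {t. t < n \<and> x t \<notin> K} \<le> card {t. t < n \<and> x t \<notin> Kh}"
      by (rule card_mono[rotated]) simp
    then show ?thesis unfolding noise_rate_def by (simp add: divide_right_mono)
  qed
  then show ?thesis using N by (meson order_le_less_trans)
qed

lemma counting:
  fixes Ls :: "nat \<Rightarrow> nat set" and x :: "nat \<Rightarrow> nat"
  assumes inj: "inj x" and B: "B \<subseteq> {..k0}" and n: "0 < n"
    and thrB: "\<And>j. j \<in> B \<Longrightarrow> noise_rate (Ls j) x n \<le> thr j"
    and fin: "finite (\<Inter>j\<in>B. Ls j)"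
  shows "real n \<le> 2 * real (card (\<Inter>j\<in>B. Ls j))"
proof -
  define I where "I = (\<Inter>j\<in>B. Ls j)"
  define P where "P = {t. t < n \<and> x t \<in> I}"
  define Q where "Q = (\<Union>j\<in>B. {t. t < n \<and> x t \<notin> Ls j})"
  have finB: "finite B" using B finite_subset by blast
  have "{..<n} \<subseteq> P \<union> Q" unfolding P_def Q_def I_def by blast
  moreover have "P \<union> Q \<subseteq> {..<n}" unfolding P_def Q_def by blast
  ultimately have "P \<union> Q = {..<n}" by (rule subset_antisym[rotated])
  then have "n \<le> card (P \<union> Q)" by simp
  also have "\<dots> \<le> card P + card Q" by (rule card_Un_le)
  finally have n1: "n \<le> card P + card Q" .
  have "card P \<le> card I"
  proof (rule card_inj_on_le)
    show "inj_on x P" using inj by (simp add: inj_on_def inj_def)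
    show "x ` P \<subseteq> I" unfolding P_def by blast
    show "finite I" using fin I_def by simp
  qed
  have "card Q \<le> (\<Sum>j\<in>B. card {t. t < n \<and> x t \<notin> Ls j})"
    unfolding Q_def by (rule card_UN_le[OF finB])
  then have "real (card Q) \<le> (\<Sum>j\<in>B. real (card {t. t < n \<and> x t \<notin> Ls j}))"
    unfolding of_nat_sum[symmetric] of_nat_le_iff .
  also have "\<dots> \<le> (\<Sum>j\<in>B. real n * thr j)"
  proof (rule sum_mono)
    fix j assume "j \<in> B"
    then have "noise_rate (Ls j) x n \<le> thr j" by (rule thrB)
    then show "real (card {t. t < n \<and> x t \<notin> Ls j}) \<le> real n * thr j"
      using n unfolding noise_rate_def by (simp add: divide_le_eq mult.commute del: of_nat_le_iff)
  qed
  also have "\<dots> = real n * (\<Sum>j\<in>B. thr j)" by (simp add: sum_distrib_left)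
  also have "\<dots> \<le> real n * (1/2)"
  proof -
    have "(\<Sum>j\<in>B. thr j) \<le> (\<Sum>j<Suc k0. thr j)"
      by (rule sum_mono2) (use B in \<open>auto simp: thr_def\<close>)
    also have "\<dots> \<le> 1/2" unfolding thr_sum by simp
    finally show ?thesis by (intro mult_left_mono) simp_all
  qed
  finally have "real (card Q) \<le> real n / 2" by simp
  moreover have "real n \<le> real (card P) + real (card Q)" using n1 by linarith
  moreover have "real (card P) \<le> real (card I)" using \<open>card P \<le> card I\<close> by simp
  ultimately have "real n \<le> 2 * real (card I)" by linarith
  then show ?thesis unfolding I_def .
qed

theorem theorem5p1:
  shows "\<exists>G. element_generator G \<and>
    (\<forall>Ls :: nat \<Rightarrow> nat set. (\<forall>i. infinite (Ls i)) \<longrightarrow>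
      (\<forall>K \<in> range Ls. \<forall>x. noisy_enum_omissions K x \<longrightarrow>
         (\<exists>n0. \<forall>n \<ge> n0. G Ls (map x [0..<n]) \<in> K)))"
proof (rule exI[of _ gen], rule conjI[OF gen_elem], intro allI impI ballI)
  fix Ls :: "nat \<Rightarrow> nat set" and K x
  assume K: "K \<in> range Ls" and x: "noisy_enum_omissions K x"
  obtain k0 where k0: "K = Ls k0" using K by blast
  have inj: "inj x" using x unfolding noisy_enum_omissions_def noisy_enum_def by blast
  have "0 < thr k0" by (simp add: thr_def)
  then obtain N1 where N1: "\<And>n. n \<ge> N1 \<Longrightarrow> noise_rate K x n < thr k0"
    using noise_K_small[OF x] by blast
  define W where "W = \<Union>((\<lambda>B. \<Inter>j\<in>B. Ls j) ` {B. B \<subseteq> {..k0} \<and> finite (\<Inter>j\<in>B. Ls j)})"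
  have finW: "finite W" unfolding W_def
  proof (rule finite_Union)
    have "{B. B \<subseteq> {..k0} \<and> finite (\<Inter>j\<in>B. Ls j)} \<subseteq> Pow {..k0}" by blast
    then show "finite ((\<lambda>B. \<Inter>j\<in>B. Ls j) ` {B. B \<subseteq> {..k0} \<and> finite (\<Inter>j\<in>B. Ls j)})"
      by (meson finite_Pow_iff finite_atMost finite_imageI finite_subset)
    show "\<And>M. M \<in> (\<lambda>B. \<Inter>j\<in>B. Ls j) ` {B. B \<subseteq> {..k0} \<and> finite (\<Inter>j\<in>B. Ls j)} \<Longrightarrow> finite M"
      by blast
  qed
  show "\<exists>n0. \<forall>n\<ge>n0. gen Ls (map x [0..<n]) \<in> K"
  proof (intro exI allI impI)
    fix n assume n: "max (Suc k0) (max N1 (2 * card W + 1)) \<le> n"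
    define xs where "xs = map x [0..<n]"
    have len: "length xs = n" unfolding xs_def by simp
    define B where "B = insert k0 (acc Ls xs k0)"
    have Bsub: "B \<subseteq> {..k0}" unfolding B_def using acc_sub[of Ls xs k0] by auto
    have thrB: "noise_rate (Ls j) x n \<le> thr j" if "j \<in> B" for j
    proof (cases "j = k0")
      case True then show ?thesis using N1[of n] n k0 by auto
    next
      case False
      then have "j \<in> acc Ls xs k0" using that B_def by auto
      then show ?thesis using acc_thr[of j Ls xs k0] nr_eq xs_def by metis
    qed
    have infB: "infinite (\<Inter>j\<in>B. Ls j)"
    proof
      assume fin: "finite (\<Inter>j\<in>B. Ls j)"
      have "real n \<le> 2 * real (card (\<Inter>j\<in>B. Ls j))"
        using counting[OF inj Bsub _ thrB fin] n by auto
      moreover have "(\<Inter>j\<in>B. Ls j) \<subseteq> W" unfolding W_def using Bsub fin by blast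
      then have "card (\<Inter>j\<in>B. Ls j) \<le> card W" using finW by (rule card_mono[rotated])
      ultimately show False using n by linarith
    qed
    have "nr (Ls k0) xs \<le> thr k0" using N1[of n] n k0 nr_eq xs_def by (metis less_imp_le max.boundedE)
    then have "k0 \<in> acc Ls xs (Suc k0)" using infB B_def by simp
    moreover have "acc Ls xs (Suc k0) \<subseteq> acc Ls xs n" using n by (intro acc_mono) simp
    ultimately have k0in: "k0 \<in> acc Ls xs (length xs)" using len by blast
    have candK: "cand Ls xs \<subseteq> K" unfolding cand_def k0 using k0in by blast
    obtain k where k: "length xs = Suc k" using n len by (cases n) auto
    have "gen Ls xs = pick (cand Ls xs) (set xs \<union> set (outs Ls xs k))" by (rule gen_eq[OF k])
    also have "\<dots> \<in> cand Ls xs" by (rule pick_in) (simp_all add: cand_def acc_inf)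
    finally show "gen Ls (map x [0..<n]) \<in> K" using candK xs_def by blast
  qed
qed

end
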